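(* Let $G$ be a group with identity $e$, $A$ a set with at least two elements, $\tau: A^G\to A^G$ a lazy cellular automaton, and $n\in\mathbb{Z}_+$. Then \[\mathrm{ord}(\tau) > n \iff \tau^{j-1}\neq \tau^{j} \text{ for all } j \in \{1, \ldots, n\}. \] Furthermore, $\mathrm{ord}(\tau) = \min\{n\geq 2: \tau^{n-1}=\tau^n\}$.
   Context: $A^G$ is the set of maps $G \to A$ with shift action $(g\cdot x)(h) := x(hg)$. A cellular automaton is a map $\tau : A^G \to A^G$ with a finite $S \subseteq G$ and $\mu : A^S \to A$ such that $\tau(x)(g) = \mu((g\cdot x)|_S)$. $\tau$ is lazy if there is such a local defining map $\mu : A^S \to A$ with $e \in S$ and $p \in A^S$ such that for all $z \in A^S$: $\mu(z) = z(e)$ iff $z \neq p$. $\tau^k$ is the $k$-fold composition, $\tau^0$ the identity; $\mathrm{ord}(\tau) := |\{\tau^k : k \in \mathbb{N}\}|$ with $\mathbb{N}=\{0,1,2,\dots\}$ (possibly infinite; the minimum of the empty set is read as $\infty$). *)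

theory Defs
  imports Main "HOL-Library.FuncSet" "HOL-Library.Extended_Nat"
begin

text \<open>The group G is a type of class group_add (written additively, not necessarily
commutative; the identity e is 0).
Patterns in A^S are the extensional functions in S ->E UNIV.\<close>

definition shift :: "'g::group_add \<Rightarrow> ('g \<Rightarrow> 'a) \<Rightarrow> ('g \<Rightarrow> 'a)" where
  "shift g x = (\<lambda>h. x (h + g))"

definition cellular_automaton :: "(('g::group_add \<Rightarrow> 'a) \<Rightarrow> ('g \<Rightarrow> 'a)) \<Rightarrow> bool" where
  "cellular_automaton \<tau> \<longleftrightarrow>
     (\<exists>S (\<mu> :: ('g \<Rightarrow> 'a) \<Rightarrow> 'a). finite S \<and>
        (\<forall>x g. \<tau> x g = \<mu> (restrict (shift g x) S)))"

definition lazy_ca :: "(('g::group_add \<Rightarrow> 'a) \<Rightarrow> ('g \<Rightarrow> 'a)) \<Rightarrow> bool" where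
  "lazy_ca \<tau> \<longleftrightarrow>
     (\<exists>S (\<mu> :: ('g \<Rightarrow> 'a) \<Rightarrow> 'a) p. finite S \<and>
        (\<forall>x g. \<tau> x g = \<mu> (restrict (shift g x) S)) \<and>
        0 \<in> S \<and> p \<in> (S \<rightarrow>\<^sub>E UNIV) \<and>
        (\<forall>z \<in> S \<rightarrow>\<^sub>E UNIV. \<mu> z = z 0 \<longleftrightarrow> z \<noteq> p))"

definition ca_ord :: "('c \<Rightarrow> 'c) \<Rightarrow> enat" where
  "ca_ord \<tau> = (if finite (range (\<lambda>k. \<tau> ^^ k)) then enat (card (range (\<lambda>k. \<tau> ^^ k))) else \<infinity>)"

end

theory Submission
  imports Defs
begin

lemma lazy_change:
  assumes "lazy_ca (\<tau> :: ('g::group_add \<Rightarrow> 'a) \<Rightarrow> ('g \<Rightarrow> 'a))"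
  obtains a b :: 'a where "a \<noteq> b" "\<And>x g. \<tau> x g \<noteq> x g \<Longrightarrow> x g = a \<and> \<tau> x g = b"
    and "\<tau> \<noteq> id"
proof -
  obtain S \<mu> p where fin: "finite S" and tau': "\<forall>x g. \<tau> x g = \<mu> (restrict (shift g x) S)"
    and S0: "0 \<in> S" and pS: "p \<in> (S \<rightarrow>\<^sub>E UNIV)"
    and mu': "\<forall>z \<in> S \<rightarrow>\<^sub>E UNIV. (\<mu> z = z 0 \<longleftrightarrow> z \<noteq> p)"
    using assms unfolding lazy_ca_def by (elim exE conjE) (rule that, assumption+)
  have tau: "\<And>x g. \<tau> x g = \<mu> (restrict (shift g x) S)" using tau' by blast
  have mu: "\<And>z. z \<in> S \<rightarrow>\<^sub>E UNIV \<Longrightarrow> (\<mu> z = z 0 \<longleftrightarrow> z \<noteq> p)" using mu' by blast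
  have ab: "p 0 \<noteq> \<mu> p" using mu[OF pS] by simp
  have ch: "x g = p 0 \<and> \<tau> x g = \<mu> p" if "\<tau> x g \<noteq> x g" for x g
  proof -
    let ?z = "restrict (shift g x) S"
    have zS: "?z \<in> S \<rightarrow>\<^sub>E UNIV" by auto
    have z0: "?z 0 = x g" using S0 by (simp add: shift_def)
    have "\<mu> ?z \<noteq> ?z 0" using that tau z0 by simp
    hence "?z = p" using mu[OF zS] by blast
    thus ?thesis using z0 tau by auto
  qed
  have "restrict (shift 0 p) S = p" using pS
    by (auto simp: shift_def PiE_def extensional_def restrict_def)
  hence "\<tau> p 0 \<noteq> p 0" using tau[of p 0] ab by simp
  hence "\<tau> \<noteq> id" by auto
  note this
  show ?thesis by (rule that[OF ab ch \<open>\<tau> \<noteq> id\<close>])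
qed

lemma periodic_fixed:
  assumes "lazy_ca (\<tau> :: ('g::group_add \<Rightarrow> 'a) \<Rightarrow> ('g \<Rightarrow> 'a))"
    and "(\<tau> ^^ m) y = y" and "m \<ge> 1"
  shows "\<tau> y = y"
proof (rule ccontr)
  assume ne: "\<tau> y \<noteq> y"
  obtain a b where ab: "a \<noteq> b" and ch: "\<And>x g. \<tau> x g \<noteq> x g \<Longrightarrow> x g = a \<and> \<tau> x g = b"
    and "\<tau> \<noteq> id" by (rule lazy_change[OF assms(1)]) blast
  obtain g where g: "\<tau> y g \<noteq> y g" using ne by auto
  have yg: "y g = a" "\<tau> y g = b" using ch[OF g] by auto
  have "(\<tau> ^^ Suc k) y g = b" for k
  proof (induction k)
    case 0 then show ?case using yg by simp
  next
    case (Suc k)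
    show ?case
    proof (rule ccontr)
      assume "(\<tau> ^^ Suc (Suc k)) y g \<noteq> b"
      hence "\<tau> ((\<tau> ^^ Suc k) y) g \<noteq> (\<tau> ^^ Suc k) y g" using Suc by simp
      hence "(\<tau> ^^ Suc k) y g = a" using ch by blast
      thus False using Suc ab by simp
    qed
  qed
  from this[of "m - 1"] assms(3) have "(\<tau> ^^ m) y g = b" by simp
  thus False using assms(2) yg ab by simp
qed

lemma F2:
  assumes "lazy_ca (\<tau> :: ('g::group_add \<Rightarrow> 'a) \<Rightarrow> ('g \<Rightarrow> 'a))"
    and "\<tau> ^^ i = \<tau> ^^ j" and "i < j"
  shows "\<tau> ^^ i = \<tau> ^^ Suc i"
proof
  fix x
  let ?y = "(\<tau> ^^ i) x"
  have "(\<tau> ^^ (j - i)) ?y = (\<tau> ^^ j) x"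
    using assms(3) by (metis comp_apply funpow_add le_add_diff_inverse2 less_imp_le)
  also have "\<dots> = ?y" using assms(2) by simp
  finally have "\<tau> ?y = ?y" using periodic_fixed[OF assms(1)] assms(3) by simp
  thus "(\<tau> ^^ i) x = (\<tau> ^^ Suc i) x" by simp
qed

lemma F3:
  fixes \<tau> :: "'c \<Rightarrow> 'c"
  assumes "\<tau> ^^ i = \<tau> ^^ Suc i"
  shows "\<tau> ^^ (k + i) = \<tau> ^^ i"
proof (induction k)
  case 0 then show ?case by simp
next
  case (Suc k)
  have "\<tau> ^^ (Suc k + i) = \<tau> \<circ> \<tau> ^^ (k + i)" by simp
  also have "\<dots> = \<tau> \<circ> \<tau> ^^ i" using Suc by simp
  also have "\<dots> = \<tau> ^^ i" using assms by simp
  finally show ?case .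
qed

theorem corollary2:
  fixes \<tau> :: "('g::group_add \<Rightarrow> 'a) \<Rightarrow> ('g \<Rightarrow> 'a)" and n :: nat
  assumes "\<exists>a b :: 'a. a \<noteq> b"
    and "lazy_ca \<tau>"
    and "n \<ge> 1"
  shows "(ca_ord \<tau> > enat n \<longleftrightarrow> (\<forall>j \<in> {1..n}. \<tau> ^^ (j - 1) \<noteq> \<tau> ^^ j))
         \<and> ca_ord \<tau> = Inf (enat ` {m. m \<ge> 2 \<and> \<tau> ^^ (m - 1) = \<tau> ^^ m})"
proof (cases "\<exists>m. \<tau> ^^ m = \<tau> ^^ Suc m")
  case True
  define N where "N = (LEAST m. \<tau> ^^ m = \<tau> ^^ Suc m)"
  have N: "\<tau> ^^ N = \<tau> ^^ Suc N" unfolding N_def by (rule LeastI_ex[OF True])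
  have Nmin: "\<And>m. m < N \<Longrightarrow> \<tau> ^^ m \<noteq> \<tau> ^^ Suc m" unfolding N_def by (rule not_less_Least)
  obtain a b :: 'a where "a \<noteq> b" "\<And>x g. \<tau> x g \<noteq> x g \<Longrightarrow> x g = a \<and> \<tau> x g = b"
    and "\<tau> \<noteq> id" by (rule lazy_change[OF assms(2)]) blast
  have N1: "N \<ge> 1"
  proof (rule ccontr)
    assume "\<not> N \<ge> 1"
    hence "N = 0" by simp
    hence "\<tau> ^^ 0 = \<tau> ^^ Suc 0" using N by simp
    hence "id = \<tau>" by simp
    thus False using \<open>\<tau> \<noteq> id\<close> by simp
  qed
  have geN: "\<tau> ^^ k = \<tau> ^^ N" if "k \<ge> N" for k
    using F3[OF N, of "k - N"] that by simp
  have rng: "range (\<lambda>k. \<tau> ^^ k) = (\<lambda>k. \<tau> ^^ k) ` {0..N}"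
  proof
    show "range (\<lambda>k. \<tau> ^^ k) \<subseteq> (\<lambda>k. \<tau> ^^ k) ` {0..N}"
    proof
      fix f assume "f \<in> range (\<lambda>k. \<tau> ^^ k)"
      then obtain k where k: "f = \<tau> ^^ k" by auto
      show "f \<in> (\<lambda>k. \<tau> ^^ k) ` {0..N}"
      proof (cases "k \<le> N")
        case True thus ?thesis using k by auto
      next
        case False thus ?thesis using k geN[of k] by auto
      qed
    qed
  qed auto
  have inj: "inj_on (\<lambda>k. \<tau> ^^ k) {0..N}"
  proof (rule inj_onI, rule ccontr)
    fix i j assume ij: "i \<in> {0..N}" "j \<in> {0..N}" "\<tau> ^^ i = \<tau> ^^ j" "i \<noteq> j"
    show False
    proof (cases "i < j")
      case True
      hence "\<tau> ^^ i = \<tau> ^^ Suc i" using F2[OF assms(2) ij(3)] by blast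
      thus False using Nmin[of i] True ij by auto
    next
      case False
      hence "j < i" using ij by auto
      hence "\<tau> ^^ j = \<tau> ^^ Suc j" using F2[OF assms(2) ij(3)[symmetric]] by blast
      thus False using Nmin[of j] \<open>j < i\<close> ij by auto
    qed
  qed
  have ord: "ca_ord \<tau> = enat (Suc N)"
    unfolding ca_ord_def rng using inj by (simp add: card_image)
  have set: "{m. m \<ge> 2 \<and> \<tau> ^^ (m - 1) = \<tau> ^^ m} = {Suc N..}"
  proof (intro set_eqI iffI)
    fix m assume m: "m \<in> {m. m \<ge> 2 \<and> \<tau> ^^ (m - 1) = \<tau> ^^ m}"
    hence "\<tau> ^^ (m - 1) = \<tau> ^^ Suc (m - 1)" by simp
    hence "\<not> (m - 1 < N)" using Nmin by blast
    thus "m \<in> {Suc N..}" using m by auto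
  next
    fix m assume m: "m \<in> {Suc N..}"
    thus "m \<in> {m. m \<ge> 2 \<and> \<tau> ^^ (m - 1) = \<tau> ^^ m}"
      using geN[of m] geN[of "m - 1"] N1 by auto
  qed
  have inf: "Inf (enat ` {Suc N..}) = enat (Suc N)"
    by (rule cInf_eq_minimum) auto
  have part1: "(enat (Suc N) > enat n) \<longleftrightarrow> (\<forall>j \<in> {1..n}. \<tau> ^^ (j - 1) \<noteq> \<tau> ^^ j)"
  proof
    assume "enat (Suc N) > enat n"
    hence "n \<le> N" by simp
    thus "\<forall>j \<in> {1..n}. \<tau> ^^ (j - 1) \<noteq> \<tau> ^^ j"
    proof (intro ballI)
      fix j assume j: "j \<in> {1..n}"
      hence "j - 1 < N" using \<open>n \<le> N\<close> by auto
      hence ne: "\<tau> ^^ (j - 1) \<noteq> \<tau> ^^ Suc (j - 1)" using Nmin by blast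
      obtain i where i: "j = Suc i" using j by (cases j) auto
      show "\<tau> ^^ (j - 1) \<noteq> \<tau> ^^ j" using ne unfolding i by simp
    qed
  next
    assume H: "\<forall>j \<in> {1..n}. \<tau> ^^ (j - 1) \<noteq> \<tau> ^^ j"
    show "enat (Suc N) > enat n"
    proof (rule ccontr)
      assume "\<not> enat (Suc N) > enat n"
      hence "Suc N \<le> n" by simp
      hence "Suc N \<in> {1..n}" by simp
      hence "\<tau> ^^ (Suc N - 1) \<noteq> \<tau> ^^ (Suc N)" using H by blast
      hence "\<tau> ^^ N \<noteq> \<tau> ^^ Suc N" by simp
      thus False using N by blast
    qed
  qed
  show ?thesis using ord set inf part1 by simp
next
  case False
  note nofix = False
  have inj: "inj (\<lambda>k. \<tau> ^^ k)"
  proof (rule injI, rule ccontr)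
    fix i j assume ij: "\<tau> ^^ i = \<tau> ^^ j" "i \<noteq> j"
    show False
    proof (cases "i < j")
      case True
      have "\<tau> ^^ i = \<tau> ^^ Suc i" by (rule F2[OF assms(2) ij(1) True])
      thus False using nofix by blast
    next
      case c: False
      hence "j < i" using ij by auto
      have "\<tau> ^^ j = \<tau> ^^ Suc j" by (rule F2[OF assms(2) ij(1)[symmetric] \<open>j < i\<close>])
      thus False using nofix by blast
    qed
  qed
  have "infinite (range (\<lambda>k. \<tau> ^^ k))"
    using inj by (simp add: finite_image_iff)
  hence ord: "ca_ord \<tau> = \<infinity>" unfolding ca_ord_def by simp
  have E: "\<tau> ^^ (m - 1) \<noteq> \<tau> ^^ m" if m1: "m \<ge> 1" for m
  proof -
    have ne: "\<tau> ^^ (m - 1) \<noteq> \<tau> ^^ Suc (m - 1)" using nofix by blast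
    obtain i where i: "m = Suc i" using m1 by (cases m) auto
    show ?thesis using ne unfolding i by simp
  qed
  have emp: "{m. m \<ge> 2 \<and> \<tau> ^^ (m - 1) = \<tau> ^^ m} = {}"
  proof (intro set_eqI iffI)
    fix m assume "m \<in> {m. m \<ge> 2 \<and> \<tau> ^^ (m - 1) = \<tau> ^^ m}"
    hence "m \<ge> 1" "\<tau> ^^ (m - 1) = \<tau> ^^ m" by auto
    thus "m \<in> {}" using E by blast
  qed simp
  have p1: "\<forall>j \<in> {1..n}. \<tau> ^^ (j - 1) \<noteq> \<tau> ^^ j" using E by simp
  show ?thesis unfolding emp ord using p1 by (simp add: Inf_enat_def)
qed

end
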